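(* Consider the uncertain control affine system \[ \dot x = f(x) + g(x)u + \varphi(x,u)\theta,\qquad \varphi(x,u)=[F(x)\;\; G(x)\,\mathrm{diag}(u)]\in\mathbb{R}^{n\times(p+m)}, \] with state $x\in\mathbb{R}^n$, input $u\in\mathcal{U}\subseteq\mathbb{R}^m$, known locally Lipschitz $f:\mathbb{R}^n\to\mathbb{R}^n$, $g:\mathbb{R}^n\to\mathbb{R}^{n\times m}$, known matrix-valued functions $F:\mathbb{R}^n\to\mathbb{R}^{n\times p}$, $G:\mathbb{R}^n\to\mathbb{R}^{n\times m}$, and unknown $\theta\in\mathbb{R}^{p+m}$. Assume $\theta\in\Theta:=[\underline{\theta}_1,\overline{\theta}_1]\times\cdots\times[\underline{\theta}_{p+m},\overline{\theta}_{p+m}]$ for known constants, and write $\Theta=\{\theta\in\mathbb{R}^{p+m}: A\theta\le b\}$ with $A\in\mathbb{R}^{2(p+m)\times(p+m)}$, $b\in\mathbb{R}^{2(p+m)}$ its halfspace representation. Let $h:\mathbb{R}^n\to\mathbb{R}$ be continuously differentiable, $\mathcal{C}=\{x: h(x)\ge0\}$, and suppose there is an extended class $\mathcal{K}$ function $\alpha$ with \[ \sup_{u\in\mathcal{U}}\inf_{\theta\in\Theta}\big(L_fh(x)+L_gh(x)u+L_\varphi h(x,u)\theta\big)\ge -\alpha(h(x))\quad\forall x\in\mathcal{C}, \] and that for each $x\in\mathcal{C}$ the set $K_{rcbf}(x)=\{u\in\mathcal{U}\mid L_fh(x)+L_gh(x)u+\inf_{\theta\in\Theta}L_\varphi h(x,u)\theta\ge-\alpha(h(x))\}$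 is nonempty. Let $k_d:\mathbb{R}^n\to\mathbb{R}^m$ be a locally Lipschitz nominal policy and, for each $x$, consider the quadratic program in the decision variables $u\in\mathcal{U}$ and $\mu\in\mathbb{R}^{2(p+m)}$: \[ \min_{u\in\mathcal{U},\,\mu\le 0}\ \tfrac12\|u-k_d(x)\|^2\quad\text{s.t.}\quad L_fh(x)+L_gh(x)u+b^\top\mu\ge-\alpha(h(x)),\qquad \mu^\top A=L_\varphi h(x,u). \] Then any locally Lipschitz policy $u=k(x)$ given by (the $u$-component of) a solution of this program renders $\mathcal{C}$ forward invariant for the closed-loop system $\dot x=f(x)+g(x)k(x)+\varphi(x,k(x))\theta$.
   Context: $L_fh(x)=\nabla h(x)f(x)$, $L_gh(x)=\nabla h(x)g(x)$, $L_\varphi h(x,u)=\nabla h(x)\varphi(x,u)\in\mathbb{R}^{1\times(p+m)}$ (affine in $u$). $\mu\le0$ is componentwise. An extended class $\mathcal{K}$ function is a continuous strictly increasing $\alpha:\mathbb{R}\to\mathbb{R}$ with $\alpha(0)=0$. $\mathrm{diag}(u)$ is the diagonal matrix with the entries of $u$ on its diagonal. A closed set $\mathcal{C}$ is forward invariant if every closed-loop solution starting in $\mathcal{C}$ stays in $\mathcal{C}$ on its maximal interval of existence. *)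

theory Defs
  imports "HOL-Analysis.Analysis"
begin

definition locally_lipschitz :: "('a::metric_space \<Rightarrow> 'b::metric_space) \<Rightarrow> bool" where
  "locally_lipschitz f \<longleftrightarrow> (\<forall>x. \<exists>e>0. \<exists>L. L-lipschitz_on (ball x e) f)"

definition ext_class_K :: "(real \<Rightarrow> real) \<Rightarrow> bool" where
  "ext_class_K \<alpha> \<longleftrightarrow> continuous_on UNIV \<alpha> \<and> strict_mono \<alpha> \<and> \<alpha> 0 = 0"

text \<open>The regressor phi(x,u) = [F(x)  G(x) diag(u)], columns indexed by 'p + 'm.\<close>
definition regressor ::
  "(real^'n::finite \<Rightarrow> real^'p::finite^'n) \<Rightarrow> (real^'n \<Rightarrow> real^'m::finite^'n) \<Rightarrow> real^'n \<Rightarrow> real^'m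
     \<Rightarrow> real^('p + 'm)^'n" where
  "regressor F G x u = (\<chi> i j. case j of Inl k \<Rightarrow> F x $ i $ k | Inr k \<Rightarrow> G x $ i $ k * u $ k)"

text \<open>Lie derivatives, with grad h(x) represented as a vector gradh x.\<close>
definition Lf :: "(real^'n::finite \<Rightarrow> real^'n) \<Rightarrow> (real^'n \<Rightarrow> real^'n) \<Rightarrow> real^'n \<Rightarrow> real" where
  "Lf gradh f x = gradh x \<bullet> f x"

definition Lg :: "(real^'n::finite \<Rightarrow> real^'n) \<Rightarrow> (real^'n \<Rightarrow> real^'m::finite^'n) \<Rightarrow> real^'n \<Rightarrow> real^'m" where
  "Lg gradh g x = gradh x v* g x"

definition Lphi ::
  "(real^'n::finite \<Rightarrow> real^'n) \<Rightarrow> (real^'n \<Rightarrow> real^'p::finite^'n) \<Rightarrow> (real^'n \<Rightarrow> real^'m::finite^'n)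
     \<Rightarrow> real^'n \<Rightarrow> real^'m \<Rightarrow> real^('p + 'm)" where
  "Lphi gradh F G x u = gradh x v* regressor F G x u"

definition qp_feasible ::
  "(real^'m::finite) set \<Rightarrow> real^('p::finite + 'm)^'r::finite \<Rightarrow> real^'r \<Rightarrow> (real^'n::finite \<Rightarrow> real)
    \<Rightarrow> (real^'n \<Rightarrow> real^'n) \<Rightarrow> (real \<Rightarrow> real) \<Rightarrow> (real^'n \<Rightarrow> real^'n) \<Rightarrow> (real^'n \<Rightarrow> real^'m^'n)
    \<Rightarrow> (real^'n \<Rightarrow> real^'p^'n) \<Rightarrow> (real^'n \<Rightarrow> real^'m^'n) \<Rightarrow> real^'n \<Rightarrow> real^'m \<Rightarrow> real^'r \<Rightarrow> bool" where
  "qp_feasible U A b h gradh \<alpha> f g F G x u \<mu> \<longleftrightarrow>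
     u \<in> U \<and> (\<forall>i. \<mu> $ i \<le> 0) \<and>
     Lf gradh f x + Lg gradh g x \<bullet> u + b \<bullet> \<mu> \<ge> - \<alpha> (h x) \<and>
     \<mu> v* A = Lphi gradh F G x u"

definition qp_solution ::
  "(real^'m::finite) set \<Rightarrow> real^('p::finite + 'm)^'r::finite \<Rightarrow> real^'r \<Rightarrow> (real^'n::finite \<Rightarrow> real)
    \<Rightarrow> (real^'n \<Rightarrow> real^'n) \<Rightarrow> (real \<Rightarrow> real) \<Rightarrow> (real^'n \<Rightarrow> real^'n) \<Rightarrow> (real^'n \<Rightarrow> real^'m^'n)
    \<Rightarrow> (real^'n \<Rightarrow> real^'p^'n) \<Rightarrow> (real^'n \<Rightarrow> real^'m^'n) \<Rightarrow> (real^'n \<Rightarrow> real^'m)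
    \<Rightarrow> real^'n \<Rightarrow> real^'m \<Rightarrow> real^'r \<Rightarrow> bool" where
  "qp_solution U A b h gradh \<alpha> f g F G kd x u \<mu> \<longleftrightarrow>
     qp_feasible U A b h gradh \<alpha> f g F G x u \<mu> \<and>
     (\<forall>u' \<mu>'. qp_feasible U A b h gradh \<alpha> f g F G x u' \<mu>' \<longrightarrow>
        (1/2) * (norm (u - kd x))\<^sup>2 \<le> (1/2) * (norm (u' - kd x))\<^sup>2)"

definition forward_invariant :: "(real^'n::finite \<Rightarrow> real^'n) \<Rightarrow> (real^'n) set \<Rightarrow> bool" where
  "forward_invariant V S \<longleftrightarrow>
     (\<forall>(x::real \<Rightarrow> real^'n) t0 T. t0 \<le> T \<longrightarrow>
        (\<forall>t\<in>{t0..T}. (x has_vector_derivative V (x t)) (at t within {t0..T})) \<longrightarrow>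
        x t0 \<in> S \<longrightarrow> (\<forall>t\<in>{t0..T}. x t \<in> S))"

end

theory Submission
  imports Defs
begin

lemma comparison_nonneg:
  fixes y y' :: "real \<Rightarrow> real" and \<alpha> :: "real \<Rightarrow> real"
  assumes mono: "strict_mono \<alpha>" and a0: "\<alpha> 0 = 0"
    and der: "\<And>t. t \<in> {t0..T} \<Longrightarrow> (y has_real_derivative y' t) (at t within {t0..T})"
    and bnd: "\<And>t. t \<in> {t0..T} \<Longrightarrow> y' t \<ge> - \<alpha> (y t)"
    and y0: "y t0 \<ge> 0"
    and t1: "t1 \<in> {t0..T}"
  shows "y t1 \<ge> 0"
proof (rule ccontr)
  assume neg: "\<not> 0 \<le> y t1"
  have cont: "continuous_on {t0..T} y"
    unfolding continuous_on_eq_continuous_within using der DERIV_continuous by blast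
  have cont1: "continuous_on {t0..t1} y" using cont t1 by (auto intro: continuous_on_subset)
  define S where "S = {t0..t1} \<inter> y -` {0..}"
  have "closed S" unfolding S_def
    by (rule continuous_closed_preimage[OF cont1]) auto
  then have Sc: "compact S" unfolding S_def using bounded_Int bounded_closed_interval compact_eq_bounded_closed by blast
  have "t0 \<in> S" using y0 t1 unfolding S_def by auto
  then obtain s where sS: "s \<in> S" and smax: "\<And>t. t \<in> S \<Longrightarrow> t \<le> s"
    using compact_attains_sup[OF Sc] by blast
  have s1: "s < t1" using sS neg unfolding S_def
    by (metis IntD1 IntD2 atLeastAtMost_iff atLeast_iff order_le_less vimageE)
  have neg2: "y t < 0" if "s < t" "t \<le> t1" for t
  proof (rule ccontr)
    assume "\<not> y t < 0"
    then have "t \<in> S" using that sS unfolding S_def by auto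
    with smax that show False by force
  qed
  have "\<exists>x\<in>{s<..<t1}. y t1 - y s = (\<lambda>h. h * y' x) (t1 - s)"
  proof (rule mvt_simple[OF s1])
    fix x assume "s \<le> x" "x \<le> t1"
    then have "x \<in> {t0..T}" using sS t1 unfolding S_def by auto
    have "(y has_real_derivative y' x) (at x within {s..t1})"
    proof (rule has_field_derivative_subset[OF der[OF \<open>x \<in> {t0..T}\<close>]])
      show "{s..t1} \<subseteq> {t0..T}" using sS t1 unfolding S_def by auto
    qed
    then show "(y has_derivative (\<lambda>h. h * y' x)) (at x within {s..t1})"
      by (simp add: has_field_derivative_def mult.commute[of _ "y' x"])
  qed
  then obtain x where x: "s < x" "x < t1" and eq: "y t1 - y s = (t1 - s) * y' x" by auto
  have "x \<in> {t0..T}" using x sS t1 unfolding S_def by auto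
  have "y x < 0" using neg2 x by auto
  then have "\<alpha> (y x) < 0" using mono a0 by (metis strict_monoD)
  then have "y' x > 0" using bnd[OF \<open>x \<in> {t0..T}\<close>] by linarith
  then have "y t1 - y s > 0" using eq s1 by simp
  moreover have "y s \<ge> 0" using sS unfolding S_def by auto
  ultimately show False using neg by linarith
qed

theorem theorem1:
  fixes f :: "real^'n::finite \<Rightarrow> real^'n"
    and g :: "real^'n \<Rightarrow> real^'m::finite^'n"
    and F :: "real^'n \<Rightarrow> real^'p::finite^'n"
    and G :: "real^'n \<Rightarrow> real^'m^'n"
    and U :: "(real^'m) set"
    and \<theta> lo hi :: "real^('p + 'm)"
    and A :: "real^('p + 'm)^'r::finite"
    and b :: "real^'r"
    and h :: "real^'n \<Rightarrow> real"
    and gradh :: "real^'n \<Rightarrow> real^'n"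
    and \<alpha> :: "real \<Rightarrow> real"
    and kd k :: "real^'n \<Rightarrow> real^'m"
  defines "\<Theta> \<equiv> {th::real^('p + 'm). \<forall>i. lo $ i \<le> th $ i \<and> th $ i \<le> hi $ i}"
    and "C \<equiv> {x. h x \<ge> 0}"
  assumes f_lip: "locally_lipschitz f"
    and g_lip: "locally_lipschitz g"
    and theta_in: "\<theta> \<in> \<Theta>"
    and A_dim: "CARD('r) = 2 * CARD('p + 'm)"
    and halfspace: "{th. \<forall>i. (A *v th) $ i \<le> b $ i} = \<Theta>"
    and h_deriv: "\<And>x. (h has_derivative (\<lambda>v. gradh x \<bullet> v)) (at x)"
    and h_C1: "continuous_on UNIV gradh"
    and alpha_K: "ext_class_K \<alpha>"
    and rcbf: "\<forall>x\<in>C. (SUP u\<in>U. ereal (INF th\<in>\<Theta>.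
                 Lf gradh f x + Lg gradh g x \<bullet> u + Lphi gradh F G x u \<bullet> th))
               \<ge> ereal (- \<alpha> (h x))"
    and K_nonempty: "\<forall>x\<in>C. {u\<in>U. Lf gradh f x + Lg gradh g x \<bullet> u
                      + (INF th\<in>\<Theta>. Lphi gradh F G x u \<bullet> th) \<ge> - \<alpha> (h x)} \<noteq> {}"
    and kd_lip: "locally_lipschitz kd"
    and k_lip: "locally_lipschitz k"
    and k_qp: "\<forall>x. \<exists>\<mu>. qp_solution U A b h gradh \<alpha> f g F G kd x (k x) \<mu>"
  shows "forward_invariant (\<lambda>x. f x + g x *v k x + regressor F G x (k x) *v \<theta>) C"
proof -
  let ?V = "\<lambda>x. f x + g x *v k x + regressor F G x (k x) *v \<theta>"
  have thA: "\<forall>i. (A *v \<theta>) $ i \<le> b $ i" using theta_in halfspace by blast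
  have key: "gradh z \<bullet> ?V z \<ge> - \<alpha> (h z)" for z
  proof -
    obtain \<mu> where "qp_solution U A b h gradh \<alpha> f g F G kd z (k z) \<mu>" using k_qp by blast
    then have fe: "qp_feasible U A b h gradh \<alpha> f g F G z (k z) \<mu>" unfolding qp_solution_def by blast
    then have mu: "\<forall>i. \<mu> $ i \<le> 0"
      and ineq: "Lf gradh f z + Lg gradh g z \<bullet> k z + b \<bullet> \<mu> \<ge> - \<alpha> (h z)"
      and eqA: "\<mu> v* A = Lphi gradh F G z (k z)"
      unfolding qp_feasible_def by auto
    have "b \<bullet> \<mu> \<le> \<mu> \<bullet> (A *v \<theta>)"
      unfolding inner_vec_def
    proof (rule sum_mono)
      fix i
      have "\<mu> $ i * b $ i \<le> \<mu> $ i * (A *v \<theta>) $ i"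
        using mu thA by (simp add: mult_left_mono_neg)
      then show "b $ i \<bullet> \<mu> $ i \<le> \<mu> $ i \<bullet> (A *v \<theta>) $ i" by (simp add: mult.commute)
    qed
    also have "\<mu> \<bullet> (A *v \<theta>) = Lphi gradh F G z (k z) \<bullet> \<theta>"
      using eqA dot_lmul_matrix by metis
    also have "\<dots> = gradh z \<bullet> (regressor F G z (k z) *v \<theta>)"
      unfolding Lphi_def by (rule dot_lmul_matrix)
    finally have 1: "b \<bullet> \<mu> \<le> gradh z \<bullet> (regressor F G z (k z) *v \<theta>)" .
    have 2: "Lg gradh g z \<bullet> k z = gradh z \<bullet> (g z *v k z)"
      unfolding Lg_def by (rule dot_lmul_matrix)
    have "gradh z \<bullet> ?V z = Lf gradh f z + Lg gradh g z \<bullet> k z + gradh z \<bullet> (regressor F G z (k z) *v \<theta>)"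
      unfolding Lf_def 2 by (simp add: inner_add_right)
    then show ?thesis using 1 ineq by linarith
  qed
  show ?thesis
    unfolding forward_invariant_def
  proof (intro allI impI ballI)
    fix x :: "real \<Rightarrow> real^'n" and t0 T t
    assume le: "t0 \<le> T"
      and der: "\<forall>t\<in>{t0..T}. (x has_vector_derivative ?V (x t)) (at t within {t0..T})"
      and x0: "x t0 \<in> C" and t: "t \<in> {t0..T}"
    have yd: "((h \<circ> x) has_real_derivative gradh (x s) \<bullet> ?V (x s)) (at s within {t0..T})"
      if s: "s \<in> {t0..T}" for s
    proof -
      have "((h \<circ> x) has_vector_derivative gradh (x s) \<bullet> ?V (x s)) (at s within {t0..T})"
        using vector_derivative_diff_chain_within[OF der[rule_format, OF s]
            has_derivative_at_withinI[OF h_deriv]] by simp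
      then show ?thesis by (simp add: has_real_derivative_iff_has_vector_derivative)
    qed
    have "(h \<circ> x) t \<ge> 0"
    proof (rule comparison_nonneg[where \<alpha>=\<alpha> and y="h \<circ> x" and y'="\<lambda>s. gradh (x s) \<bullet> ?V (x s)"])
      show "strict_mono \<alpha>" "\<alpha> 0 = 0" using alpha_K unfolding ext_class_K_def by auto
      show "\<And>s. s \<in> {t0..T} \<Longrightarrow> ((h \<circ> x) has_real_derivative gradh (x s) \<bullet> ?V (x s)) (at s within {t0..T})"
        by (rule yd)
      show "\<And>s. s \<in> {t0..T} \<Longrightarrow> gradh (x s) \<bullet> ?V (x s) \<ge> - \<alpha> ((h \<circ> x) s)"
        using key by simp
      show "(h \<circ> x) t0 \<ge> 0" using x0 unfolding C_def by simp
      show "t \<in> {t0..T}" by (rule t)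
    qed
    then show "x t \<in> C" unfolding C_def by simp
  qed
qed

end
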